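(* Let $W$ be a channel from $\{1,\dots,m\}$ to $\{1,\dots,n\}$. Let \[ \mathfrak{U}_+=\Big\{\mathrm{supp}((\alpha)_+):\alpha\in\mathbb{R}^{\mathcal{D}},\ \sum_D\alpha_DD=0,\ \sum_D\alpha_D\log_2\mathrm{rank}(D)>0\Big\}, \] \[ \mathfrak{U}_-=\Big\{\mathrm{supp}((\alpha)_-):\alpha\in\mathbb{R}^{\mathcal{D}},\ \sum_D\alpha_DD=0,\ \sum_D\alpha_D\log_2\mathrm{rank}(D)>0\Big\}. \] For $\lambda\in\Lambda(W)$: $C_{11}(\lambda)=\underline{C}_{11}(W)$ if and only if there is no $U\in\mathfrak{U}_+$ with $U\subseteq\mathrm{supp}(\lambda)$; and $C_{11}(\lambda)=\overline{C}_{11}(W)$ if and only if there is no $U\in\mathfrak{U}_-$ with $U\subseteq\mathrm{supp}(\lambda)$.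
   Context: A channel is a row-stochastic matrix; a deterministic channel from $\{1,\dots,m\}$ to $\{1,\dots,n\}$ is one with 0-1 entries; $\mathcal{D}$ is the set of them, $\mathrm{rank}(D)$ the matrix rank. $\Lambda(W)=\{\lambda\text{ probability distribution on }\mathcal{D}: W=\sum_D\lambda_DD\}$. $C_{11}(\lambda)=\sum_D\lambda_D\log_2\mathrm{rank}(D)$, $\underline{C}_{11}(W)=\inf_{\lambda\in\Lambda(W)}C_{11}(\lambda)$, $\overline{C}_{11}(W)=\sup_{\lambda\in\Lambda(W)}C_{11}(\lambda)$. For $\alpha\in\mathbb{R}^{\mathcal{D}}$, $(\alpha)_+=(\max(\alpha_D,0))_D$, $(\alpha)_-=(\min(\alpha_D,0))_D$, and $\mathrm{supp}(\alpha)=\{D:\alpha_D\neq0\}$. *)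

theory Defs
  imports "HOL-Analysis.Analysis"
begin

text \<open>Channels from {1..m} to {1..n} are represented as real matrices of type
  real^'n^'m (row index 'm = inputs, column index 'n = outputs), with finite
  index types 'm and 'n.\<close>

definition channel :: "real^'n::finite^'m::finite \<Rightarrow> bool" where
  "channel W \<longleftrightarrow> (\<forall>i j. W $ i $ j \<ge> 0) \<and> (\<forall>i. (\<Sum>j\<in>UNIV. W $ i $ j) = 1)"

definition det_channels :: "(real^'n::finite^'m::finite) set" where
  "det_channels = {D. channel D \<and> (\<forall>i j. D $ i $ j = 0 \<or> D $ i $ j = 1)}"

definition Lambda :: "real^'n::finite^'m::finite \<Rightarrow> (real^'n^'m \<Rightarrow> real) set" where
  "Lambda W = {lam. (\<forall>D\<in>det_channels. lam D \<ge> 0) \<and> (\<forall>D. D \<notin> det_channels \<longrightarrow> lam D = 0)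
      \<and> (\<Sum>D\<in>det_channels. lam D) = 1 \<and> (\<Sum>D\<in>det_channels. lam D *\<^sub>R D) = W}"

definition C11 :: "(real^'n::finite^'m::finite \<Rightarrow> real) \<Rightarrow> real" where
  "C11 lam = (\<Sum>D\<in>det_channels. lam D * log 2 (real (rank D)))"

definition lowerC11 :: "real^'n::finite^'m::finite \<Rightarrow> real" where
  "lowerC11 W = Inf (C11 ` Lambda W)"

definition upperC11 :: "real^'n::finite^'m::finite \<Rightarrow> real" where
  "upperC11 W = Sup (C11 ` Lambda W)"

definition supp :: "(real^'n::finite^'m::finite \<Rightarrow> real) \<Rightarrow> (real^'n^'m) set" where
  "supp a = {D\<in>det_channels. a D \<noteq> 0}"

definition pos_part :: "('a \<Rightarrow> real) \<Rightarrow> 'a \<Rightarrow> real" where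
  "pos_part a = (\<lambda>D. max (a D) 0)"

definition neg_part :: "('a \<Rightarrow> real) \<Rightarrow> 'a \<Rightarrow> real" where
  "neg_part a = (\<lambda>D. min (a D) 0)"

definition admissible :: "(real^'n::finite^'m::finite \<Rightarrow> real) \<Rightarrow> bool" where
  "admissible a \<longleftrightarrow> (\<Sum>D\<in>det_channels. a D *\<^sub>R D) = 0
      \<and> (\<Sum>D\<in>det_channels. a D * log 2 (real (rank D))) > 0"

definition U_plus :: "(real^'n::finite^'m::finite) set set" where
  "U_plus = {supp (pos_part a) | a. admissible a}"

definition U_minus :: "(real^'n::finite^'m::finite) set set" where
  "U_minus = {supp (neg_part a) | a. admissible a}"

end

theory Submission
  imports Defs
begin

lemma fin_det: "finite (det_channels :: (real^'n::finite^'m::finite) set)"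
proof -
  have "det_channels \<subseteq> (\<lambda>f. (\<chi> i j. if f i j then 1 else 0) :: real^'n^'m) ` (UNIV :: ('m \<Rightarrow> 'n \<Rightarrow> bool) set)"
  proof
    fix D :: "real^'n^'m" assume "D \<in> det_channels"
    hence h: "\<forall>i j. D $ i $ j = 0 \<or> D $ i $ j = 1" by (simp add: det_channels_def)
    have "D = (\<chi> i j. if (\<lambda>i j. D $ i $ j = 1) i j then 1 else 0)"
      using h by (simp add: vec_eq_iff) (metis)
    thus "D \<in> (\<lambda>f. (\<chi> i j. if f i j then 1 else 0) :: real^'n^'m) ` UNIV"
      by (intro image_eqI[where x="\<lambda>i j. D $ i $ j = 1"]) auto
  qed
  thus ?thesis by (rule finite_subset) simp
qed

lemma sum_a_zero:
  fixes a :: "real^'n::finite^'m::finite \<Rightarrow> real"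
  assumes "(\<Sum>D\<in>det_channels. a D *\<^sub>R D) = 0"
  shows "(\<Sum>D\<in>det_channels. a D) = 0"
proof -
  fix i :: 'm
  have "0 = (\<Sum>j\<in>UNIV. (\<Sum>D\<in>det_channels. a D *\<^sub>R D) $ i $ j)" using assms by simp
  also have "\<dots> = (\<Sum>j\<in>UNIV. \<Sum>D\<in>det_channels. a D * D $ i $ j)" by simp
  also have "\<dots> = (\<Sum>D\<in>det_channels. a D * (\<Sum>j\<in>UNIV. D $ i $ j))"
    by (subst sum.swap) (simp add: sum_distrib_left)
  also have "\<dots> = (\<Sum>D\<in>det_channels. a D)"
    by (rule sum.cong) (auto simp: det_channels_def channel_def)
  finally show ?thesis by simp
qed

lemma perturb:
  fixes W :: "real^'n::finite^'m::finite" and lam a :: "real^'n^'m \<Rightarrow> real"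
  assumes lam: "lam \<in> Lambda W" and a0: "(\<Sum>D\<in>det_channels. a D *\<^sub>R D) = 0"
    and pos: "\<forall>D\<in>det_channels. a D > 0 \<longrightarrow> lam D > 0"
  shows "\<exists>e>0. (\<lambda>D. if D \<in> det_channels then lam D - e * a D else 0) \<in> Lambda W
          \<and> C11 (\<lambda>D. if D \<in> det_channels then lam D - e * a D else 0)
             = C11 lam - e * (\<Sum>D\<in>det_channels. a D * log 2 (real (rank D)))"
proof -
  let ?S = "{D\<in>det_channels. a D > 0}"
  define e where "e = Min (insert 1 ((\<lambda>D. lam D / a D) ` ?S))"
  have finS: "finite ?S" using fin_det by (rule finite_subset[rotated]) auto
  have epos: "e > 0" unfolding e_def using finS pos by (subst Min_gr_iff) auto
  have ele: "e \<le> lam D / a D" if "D \<in> ?S" for D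
    unfolding e_def using finS that by (intro Min_le) auto
  have nonneg: "lam D - e * a D \<ge> 0" if "D \<in> det_channels" for D
  proof (cases "a D > 0")
    case True
    hence "e * a D \<le> lam D" using ele[of D] that by (simp add: pos_le_divide_eq)
    thus ?thesis by simp
  next
    case False
    have "lam D \<ge> 0" using lam that by (simp add: Lambda_def)
    moreover have "e * a D \<le> 0" using False epos by (simp add: mult_nonneg_nonpos)
    ultimately show ?thesis by simp
  qed
  let ?l = "\<lambda>D. if D \<in> det_channels then lam D - e * a D else 0"
  have sa: "(\<Sum>D\<in>det_channels. a D) = 0" using sum_a_zero[OF a0] .
  have s1: "(\<Sum>D\<in>det_channels. ?l D) = 1"
  proof -
    have "(\<Sum>D\<in>det_channels. ?l D) = (\<Sum>D\<in>det_channels. lam D - e * a D)" by simp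
    also have "\<dots> = (\<Sum>D\<in>det_channels. lam D) - e * (\<Sum>D\<in>det_channels. a D)"
      by (simp add: sum_subtractf sum_distrib_left)
    finally show ?thesis using sa lam by (simp add: Lambda_def)
  qed
  have s2: "(\<Sum>D\<in>det_channels. ?l D *\<^sub>R D) = W"
  proof -
    have "(\<Sum>D\<in>det_channels. ?l D *\<^sub>R D) = (\<Sum>D\<in>det_channels. lam D *\<^sub>R D - e *\<^sub>R (a D *\<^sub>R D))"
      by (rule sum.cong) (auto simp: algebra_simps)
    also have "\<dots> = (\<Sum>D\<in>det_channels. lam D *\<^sub>R D) - e *\<^sub>R (\<Sum>D\<in>det_channels. a D *\<^sub>R D)"
      by (simp add: sum_subtractf scaleR_sum_right)
    finally show ?thesis using a0 lam by (simp add: Lambda_def)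
  qed
  have inL: "?l \<in> Lambda W" unfolding Lambda_def using nonneg s1 s2 by auto
  have "C11 ?l = (\<Sum>D\<in>det_channels. lam D * log 2 (real (rank D)) - e * (a D * log 2 (real (rank D))))"
    unfolding C11_def by (rule sum.cong) (auto simp: algebra_simps)
  also have "\<dots> = C11 lam - e * (\<Sum>D\<in>det_channels. a D * log 2 (real (rank D)))"
    unfolding C11_def by (simp add: sum_subtractf sum_distrib_left)
  finally show ?thesis using inL epos by blast
qed

lemma log_rank_nonneg: "log 2 (real (k::nat)) \<ge> 0"
  by (cases "k = 0") (auto simp: log_def)

lemma C11_bounds:
  fixes W :: "real^'n::finite^'m::finite"
  assumes "l \<in> Lambda W"
  shows "C11 l \<ge> 0" "C11 l \<le> (\<Sum>D\<in>(det_channels :: (real^'n^'m) set). log 2 (real (rank D)))"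
proof -
  have ge: "\<forall>D\<in>det_channels. l D \<ge> 0" using assms by (simp add: Lambda_def)
  show "C11 l \<ge> 0" unfolding C11_def using ge log_rank_nonneg by (intro sum_nonneg) auto
  have le1: "l D \<le> 1" if "D \<in> det_channels" for D
  proof -
    have "l D \<le> (\<Sum>D\<in>det_channels. l D)"
      using that ge fin_det by (intro member_le_sum) auto
    thus ?thesis using assms by (simp add: Lambda_def)
  qed
  show "C11 l \<le> (\<Sum>D\<in>(det_channels :: (real^'n^'m) set). log 2 (real (rank D)))"
    unfolding C11_def
  proof (rule sum_mono)
    fix D :: "real^'n^'m" assume "D \<in> det_channels"
    thus "l D * log 2 (real (rank D)) \<le> log 2 (real (rank D))"
      using le1 log_rank_nonneg[of "rank D"] by (simp add: mult_left_le_one_le ge)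
  qed
qed

lemma C11_diff:
  fixes l l' :: "real^'n::finite^'m::finite \<Rightarrow> real"
  shows "(\<Sum>D\<in>det_channels. (l D - l' D) * log 2 (real (rank D))) = C11 l - C11 l'"
  unfolding C11_def by (simp add: sum_subtractf left_diff_distrib)

lemma Lambda_diff0:
  fixes W :: "real^'n::finite^'m::finite"
  assumes "l \<in> Lambda W" "l' \<in> Lambda W"
  shows "(\<Sum>D\<in>det_channels. (l D - l' D) *\<^sub>R D) = 0"
  using assms by (simp add: Lambda_def scaleR_diff_left sum_subtractf)

theorem proposition2:
  fixes W :: "real^'n::finite^'m::finite" and lam :: "real^'n^'m \<Rightarrow> real"
  assumes "channel W" and "lam \<in> Lambda W"
  shows "(C11 lam = lowerC11 W \<longleftrightarrow> \<not> (\<exists>U\<in>(U_plus :: (real^'n^'m) set set). U \<subseteq> supp lam))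
       \<and> (C11 lam = upperC11 W \<longleftrightarrow> \<not> (\<exists>U\<in>(U_minus :: (real^'n^'m) set set). U \<subseteq> supp lam))"
proof -
  note lam = assms(2)
  have ne: "C11 ` Lambda W \<noteq> {}" using lam by blast
  have bb: "bdd_below (C11 ` Lambda W)" using C11_bounds(1) by (intro bdd_belowI2) blast
  have ba: "bdd_above (C11 ` Lambda W)" using C11_bounds(2) by (intro bdd_aboveI2) blast
  have lowI: "C11 lam = lowerC11 W \<longleftrightarrow> (\<forall>l\<in>Lambda W. C11 lam \<le> C11 l)"
  proof
    assume "C11 lam = lowerC11 W" thus "\<forall>l\<in>Lambda W. C11 lam \<le> C11 l"
      unfolding lowerC11_def using bb by (auto intro: cInf_lower)
  next
    assume h: "\<forall>l\<in>Lambda W. C11 lam \<le> C11 l"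
    have "lowerC11 W \<le> C11 lam" unfolding lowerC11_def using bb lam by (auto intro: cInf_lower)
    moreover have "C11 lam \<le> lowerC11 W" unfolding lowerC11_def using ne h by (auto intro: cInf_greatest)
    ultimately show "C11 lam = lowerC11 W" by simp
  qed
  have upI: "C11 lam = upperC11 W \<longleftrightarrow> (\<forall>l\<in>Lambda W. C11 l \<le> C11 lam)"
  proof
    assume "C11 lam = upperC11 W" thus "\<forall>l\<in>Lambda W. C11 l \<le> C11 lam"
      unfolding upperC11_def using ba by (auto intro: cSup_upper)
  next
    assume h: "\<forall>l\<in>Lambda W. C11 l \<le> C11 lam"
    have "C11 lam \<le> upperC11 W" unfolding upperC11_def using ba lam by (auto intro: cSup_upper)
    moreover have "upperC11 W \<le> C11 lam" unfolding upperC11_def using ne h by (auto intro: cSup_least)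
    ultimately show "C11 lam = upperC11 W" by simp
  qed
  have P1: "(\<forall>l\<in>Lambda W. C11 lam \<le> C11 l) \<longleftrightarrow> \<not> (\<exists>U\<in>(U_plus :: (real^'n^'m) set set). U \<subseteq> supp lam)"
  proof
    assume h: "\<forall>l\<in>Lambda W. C11 lam \<le> C11 l"
    show "\<not> (\<exists>U\<in>(U_plus :: (real^'n^'m) set set). U \<subseteq> supp lam)"
    proof
      assume "\<exists>U\<in>(U_plus :: (real^'n^'m) set set). U \<subseteq> supp lam"
      then obtain a :: "real^'n^'m \<Rightarrow> real" where ad: "admissible a" and sub: "supp (pos_part a) \<subseteq> supp lam"
        unfolding U_plus_def by blast
      have pos: "\<forall>D\<in>det_channels. a D > 0 \<longrightarrow> lam D > 0"
      proof (intro ballI impI)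
        fix D :: "real^'n^'m" assume D: "D \<in> det_channels" "a D > 0"
        hence "D \<in> supp (pos_part a)" by (simp add: supp_def pos_part_def)
        hence "lam D \<noteq> 0" using sub by (auto simp: supp_def)
        moreover have "lam D \<ge> 0" using lam D by (simp add: Lambda_def)
        ultimately show "lam D > 0" by simp
      qed
      obtain e l where "e > 0" "l \<in> Lambda W"
        "C11 l = C11 lam - e * (\<Sum>D\<in>det_channels. a D * log 2 (real (rank D)))"
        using perturb[OF lam _ pos] ad unfolding admissible_def by blast
      moreover have "(\<Sum>D\<in>det_channels. a D * log 2 (real (rank D))) > 0"
        using ad by (simp add: admissible_def)
      ultimately have "C11 l < C11 lam" by simp
      thus False using h \<open>l \<in> Lambda W\<close> by fastforce
    qed
  next
    assume h: "\<not> (\<exists>U\<in>(U_plus :: (real^'n^'m) set set). U \<subseteq> supp lam)"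
    show "\<forall>l\<in>Lambda W. C11 lam \<le> C11 l"
    proof (rule ccontr)
      assume "\<not> (\<forall>l\<in>Lambda W. C11 lam \<le> C11 l)"
      then obtain l where l: "l \<in> Lambda W" "C11 l < C11 lam" by force
      define a where "a = (\<lambda>D. lam D - l D)"
      have ad: "admissible a" unfolding admissible_def a_def
        using Lambda_diff0[OF lam l(1)] C11_diff[of lam l] l(2) by simp
      have "supp (pos_part a) \<subseteq> supp lam"
      proof
        fix D assume "D \<in> supp (pos_part a)"
        hence D: "D \<in> det_channels" "a D > 0" by (auto simp: supp_def pos_part_def)
        have "l D \<ge> 0" using l(1) D by (simp add: Lambda_def)
        thus "D \<in> supp lam" using D by (auto simp: supp_def a_def)
      qed
      moreover have "supp (pos_part a) \<in> (U_plus :: (real^'n^'m) set set)"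
        unfolding U_plus_def using ad by blast
      ultimately show False using h by blast
    qed
  qed
  have P2: "(\<forall>l\<in>Lambda W. C11 l \<le> C11 lam) \<longleftrightarrow> \<not> (\<exists>U\<in>(U_minus :: (real^'n^'m) set set). U \<subseteq> supp lam)"
  proof
    assume h: "\<forall>l\<in>Lambda W. C11 l \<le> C11 lam"
    show "\<not> (\<exists>U\<in>(U_minus :: (real^'n^'m) set set). U \<subseteq> supp lam)"
    proof
      assume "\<exists>U\<in>(U_minus :: (real^'n^'m) set set). U \<subseteq> supp lam"
      then obtain a :: "real^'n^'m \<Rightarrow> real" where ad: "admissible a" and sub: "supp (neg_part a) \<subseteq> supp lam"
        unfolding U_minus_def by blast
      have pos: "\<forall>D\<in>det_channels. (- a D) > 0 \<longrightarrow> lam D > 0"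
      proof (intro ballI impI)
        fix D :: "real^'n^'m" assume D: "D \<in> det_channels" "- a D > 0"
        hence "D \<in> supp (neg_part a)" by (simp add: supp_def neg_part_def)
        hence "lam D \<noteq> 0" using sub by (auto simp: supp_def)
        moreover have "lam D \<ge> 0" using lam D by (simp add: Lambda_def)
        ultimately show "lam D > 0" by simp
      qed
      have a0: "(\<Sum>D\<in>det_channels. (- a D) *\<^sub>R D) = 0"
        using ad unfolding admissible_def by (simp add: sum_negf)
      obtain e l where "e > 0" "l \<in> Lambda W"
        "C11 l = C11 lam - e * (\<Sum>D\<in>det_channels. - a D * log 2 (real (rank D)))"
        using perturb[OF lam a0 pos] by blast
      moreover have "(\<Sum>D\<in>det_channels. a D * log 2 (real (rank D))) > 0"
        using ad by (simp add: admissible_def)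
      ultimately have "C11 l > C11 lam" by (simp add: sum_negf)
      thus False using h \<open>l \<in> Lambda W\<close> by fastforce
    qed
  next
    assume h: "\<not> (\<exists>U\<in>(U_minus :: (real^'n^'m) set set). U \<subseteq> supp lam)"
    show "\<forall>l\<in>Lambda W. C11 l \<le> C11 lam"
    proof (rule ccontr)
      assume "\<not> (\<forall>l\<in>Lambda W. C11 l \<le> C11 lam)"
      then obtain l where l: "l \<in> Lambda W" "C11 l > C11 lam" by force
      define a where "a = (\<lambda>D. l D - lam D)"
      have ad: "admissible a" unfolding admissible_def a_def
        using Lambda_diff0[OF l(1) lam] C11_diff[of l lam] l(2) by simp
      have "supp (neg_part a) \<subseteq> supp lam"
      proof
        fix D assume "D \<in> supp (neg_part a)"
        hence D: "D \<in> det_channels" "a D < 0" by (auto simp: supp_def neg_part_def)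
        have "l D \<ge> 0" using l(1) D by (simp add: Lambda_def)
        thus "D \<in> supp lam" using D by (auto simp: supp_def a_def)
      qed
      moreover have "supp (neg_part a) \<in> (U_minus :: (real^'n^'m) set set)"
        unfolding U_minus_def using ad by blast
      ultimately show False using h by blast
    qed
  qed
  show ?thesis using lowI upI P1 P2 by blast
qed

end
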